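(* For all integers $n\ge2$, $$B_R(n):=\sum_{1<p\le\sqrt n}\frac{n-1}{p-1}d_p(n)\log p\le 4\,n^{3/2},$$ where the sum is over primes $p\le\sqrt n$.
   Context: For a prime $p$, $d_p(n)$ is the sum of the base-$p$ digits of the integer $n$. *)

theory Defs
  imports Complex_Main "HOL-Computational_Algebra.Primes"
begin

fun digit_sum :: "nat \<Rightarrow> nat \<Rightarrow> nat" where
  "digit_sum p n = (if p < 2 \<or> n = 0 then 0 else n mod p + digit_sum p (n div p))"

end

theory Submission
  imports Defs "HOL-Analysis.Analysis"
begin

lemma prod_primes_dvd:
  fixes B :: "nat set"
  assumes "finite B" "\<And>p. p \<in> B \<Longrightarrow> prime p" "\<And>p. p \<in> B \<Longrightarrow> p dvd c"
  shows "\<Prod>B dvd c"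
  using assms
proof (induction B rule: finite_induct)
  case empty then show ?case by simp
next
  case (insert x F)
  have cop: "coprime x (\<Prod>F)"
    using insert by (auto intro!: prod_coprime_right primes_coprime)
  have "x dvd c" "\<Prod>F dvd c" using insert by auto
  then show ?case using cop insert(1,2) by (simp add: divides_mult)
qed

lemma central_binom_le: "(2*k+1 choose k) \<le> 4^k"
proof -
  have "(2*k+1 choose k) + (2*k+1 choose (k+1)) \<le> (\<Sum>i\<le>2*k+1. (2*k+1) choose i)"
  proof -
    have "{k, k+1} \<subseteq> {..2*k+1}" by auto
    then have "(\<Sum>i\<in>{k,k+1}. (2*k+1) choose i) \<le> (\<Sum>i\<le>2*k+1. (2*k+1) choose i)"
      by (intro sum_mono2) auto
    then show ?thesis by simp
  qed
  also have "\<dots> = 2^(2*k+1)" by (rule choose_row_sum)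
  finally have "2 * (2*k+1 choose k) \<le> 2 * 4^k"
    using binomial_symmetric[of k "2*k+1"] by (simp add: power_mult power_add)
  then show ?thesis by simp
qed

lemma prime_dvd_binom:
  assumes "prime p" "k+1 < p" "p \<le> 2*k+1"
  shows "p dvd (2*k+1 choose k)"
proof -
  have "fact (2*k+1) = (2*k+1 choose k) * (fact k * fact (2*k+1-k))"
    using binomial_fact_lemma[of k "2*k+1"] by (simp add: algebra_simps)
  moreover have "p dvd fact (2*k+1)" using assms prime_dvd_fact_iff by blast
  ultimately have "p dvd (2*k+1 choose k) * (fact k * fact (k+1))" by simp
  moreover have "\<not> p \<le> k" "\<not> p \<le> k+1" using assms(2) by auto
  then have "\<not> p dvd fact k" "\<not> p dvd fact (k+1)"
    by (simp_all only: prime_dvd_fact_iff[OF assms(1)] not_False_eq_True)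
  ultimately show ?thesis using assms(1) prime_dvd_mult_iff by metis
qed

lemma primorial_bound:
  "n \<ge> 1 \<Longrightarrow> \<Prod>{p. prime p \<and> p \<le> n} \<le> (4::nat)^(n-1)"
proof (induction n rule: less_induct)
  case (less n)
  show ?case
  proof (cases "n \<le> 2")
    case True
    then have "n = 1 \<or> n = 2" using less.prems by auto
    then show ?thesis
    proof
      assume "n = 1"
      then have e: "{p. prime p \<and> p \<le> n} = {}" by (auto dest: prime_gt_1_nat)
      show ?thesis unfolding e by simp
    next
      assume "n = 2"
      then have e: "{p. prime p \<and> p \<le> n} = {2}" by (auto dest: prime_gt_1_nat simp: le_Suc_eq)
      show ?thesis unfolding e using \<open>n = 2\<close> by simp
    qed
  next
    case False
    show ?thesis
    proof (cases "even n")
      case True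
      then have "\<not> prime n" using False prime_odd_nat by force
      then have "{p. prime p \<and> p \<le> n} = {p. prime p \<and> p \<le> n - 1}" 
      proof (intro Collect_cong iffI)
        fix x assume "prime x \<and> x \<le> n"
        moreover then have "x \<noteq> n" using \<open>\<not> prime n\<close> by auto
        ultimately show "prime x \<and> x \<le> n - 1" by auto
      qed auto
      then have "\<Prod>{p. prime p \<and> p \<le> n} \<le> 4^(n-1-1)" using less.IH[of "n-1"] False by simp
      also have "\<dots> \<le> 4^(n-1)" by (intro power_increasing) auto
      finally show ?thesis .
    next
      case odd: False
      then obtain k where k: "n = 2*k+1" by (metis oddE)
      with False have k1: "k \<ge> 1" by simp
      define A where "A = {p. prime p \<and> p \<le> k+1}"
      define B where "B = {p. prime p \<and> k+1 < p \<and> p \<le> n}"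
      have un: "{p. prime p \<and> p \<le> n} = A \<union> B" "A \<inter> B = {}" using k by (auto simp: A_def B_def)
      have fA: "finite A" "finite B" by (auto simp: A_def B_def)
      have "\<Prod>A \<le> 4^k" using less.IH[of "k+1"] k k1 by (simp add: A_def)
      moreover have "\<Prod>B \<le> 4^k"
      proof -
        have "\<Prod>B dvd (2*k+1 choose k)"
          using fA by (intro prod_primes_dvd) (auto simp: B_def k intro: prime_dvd_binom[simplified])
        then have "\<Prod>B \<le> (2*k+1 choose k)" by (intro dvd_imp_le) auto
        then show ?thesis using central_binom_le[of k] by linarith
      qed
      ultimately have "\<Prod>A * \<Prod>B \<le> 4^k * 4^k" by (intro mult_mono) auto
      also have "\<dots> = 4^(n-1)" using k by (simp add: power_add[symmetric] mult_2)
      finally show ?thesis using un fA by (simp add: prod.union_disjoint)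
    qed
  qed
qed



lemma digit_sum_bound:
  assumes "p \<ge> 2"
  shows "n < p^(e+1) \<Longrightarrow> digit_sum p n \<le> (p-1)*e + n div p^e"
proof (induction e arbitrary: n)
  case 0
  then show ?case using assms by (subst digit_sum.simps) auto
next
  case (Suc e)
  show ?case
  proof (cases "n = 0")
    case True then show ?thesis by simp
  next
    case False
    have "n div p < p^(e+1)" using Suc.prems assms
      by (simp add: div_less_iff_less_mult mult.commute)
    then have ih: "digit_sum p (n div p) \<le> (p-1)*e + n div p div p^e" using Suc.IH by blast
    have "n mod p \<le> p - 1" using mod_less_divisor[of p n] assms by linarith
    have "digit_sum p n = n mod p + digit_sum p (n div p)" using False assms by (subst digit_sum.simps) auto
    also have "\<dots> \<le> (p-1) + ((p-1)*e + n div p^(Suc e))"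
      using ih \<open>n mod p \<le> p - 1\<close> by (simp add: div_mult2_eq)
    finally show ?thesis by simp
  qed
qed

lemma chord_ln:
  fixes a q :: real
  assumes "1 \<le> a" "a \<le> q" "1 < q"
  shows "(a-1) * ln q / (q-1) \<le> ln a"
proof -
  define v where "v = (a-1)/(q-1)"
  define u where "u = 1 - v"
  have v: "0 \<le> v" "v \<le> 1" using assms by (auto simp: v_def divide_simps)
  have H: "\<forall>x\<in>{0<..}. \<forall>y\<in>{0<..}. \<forall>u\<ge>0. \<forall>v\<ge>0. u + v = 1 \<longrightarrow>
        u * ln x + v * ln y \<le> ln (u * x + v * (y::real))"
    using ln_concave unfolding concave_on_iff by simp
  have "u * ln 1 + v * ln q \<le> ln (u * 1 + v * q)"
    using H[rule_format, of 1 q u v] v assms by (auto simp: u_def)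
  moreover have "v * (q-1) = a - 1" using assms by (simp add: v_def)
  then have "u * 1 + v * q = a" by (simp add: u_def algebra_simps)
  ultimately show ?thesis by (simp add: v_def)
qed

lemma per_prime:
  fixes n p :: nat
  assumes p: "prime p" and pn: "p \<le> n"
  shows "real (digit_sum p n) * ln (real p) / (real p - 1) \<le> ln (real n) + ln 2"
proof -
  have p2: "p \<ge> 2" using prime_ge_2_nat p by blast
  obtain e where e: "p^e \<le> n" "n < p^(e+1)" using ex_power_ivl1[OF p2, of n] pn p2 by auto
  define a where "a = n div p^e"
  have ppos: "p^e > 0" using p2 by simp
  have a1: "a \<ge> 1" using div_le_mono[OF e(1), of "p^e"] ppos by (simp add: a_def)
  have "a < p" using e ppos unfolding a_def by (simp add: div_less_iff_less_mult mult.commute)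
  then have ap: "a \<le> p - 1" by linarith
  have apn: "a * p^e \<le> n" using div_mult_mod_eq[of n "p^e"] unfolding a_def by linarith
  define L where "L = ln (real p)"
  have "digit_sum p n \<le> (p-1)*e + a"
    using digit_sum_bound[OF p2 e(2)] unfolding a_def by simp
  then have "real (digit_sum p n) \<le> real ((p-1)*e + a)" by (simp only: of_nat_le_iff)
  then have d: "real (digit_sum p n) \<le> (real p - 1) * e + a" using p2 by (simp add: of_nat_diff)
  have pr: "real p - 1 > 0" using p2 by simp
  have "real (digit_sum p n) * L / (real p - 1) \<le> ((real p - 1) * e + a) * L / (real p - 1)"
    using d pr p2 by (intro divide_right_mono mult_right_mono) (auto simp: L_def)
  also have "\<dots> = e * L + a * L / (real p - 1)" using pr by (simp add: field_simps)
  finally have s1: "real (digit_sum p n) * L / (real p - 1) \<le> e * L + a * L / (real p - 1)" .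
  have "ln (real a) + e * L = ln (real (a * p^e))"
    using a1 p2 by (simp add: ln_mult ln_realpow L_def)
  also have "\<dots> \<le> ln (real n)"
  proof -
    have "real (a * p^e) \<le> real n" using apn by (simp only: of_nat_le_iff)
    moreover have "real (a * p^e) > 0" using a1 ppos by simp
    ultimately show ?thesis by simp
  qed
  finally have s2: "e * L \<le> ln n - ln a" by simp
  have s3: "a * L / (real p - 1) \<le> ln a + ln 2"
  proof (cases "p = 2")
    case True
    then have "a = 1" using a1 ap by simp
    then show ?thesis using True by (simp add: L_def)
  next
    case False
    then have p3: "p \<ge> 3" using p2 by simp
    define q where "q = real p - 1"
    have q: "q \<ge> 2" using p3 by (simp add: q_def)
    have ch: "(real a-1) * ln q / (q-1) \<le> ln (real a)"
      using chord_ln[of "real a" q] a1 ap q p2 by (simp add: q_def of_nat_diff)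
    have e1: "L / q \<le> ln 2"
    proof -
      have "real p \<le> 2 powr (real p - 1)"
      proof -
        have "p - 1 < 2^(p-1)" by (rule less_exp)
        then have "p \<le> 2^(p-1)" by linarith
        then have "real p \<le> real (2^(p-1))" by (simp only: of_nat_le_iff)
        then have "real p \<le> 2^(p-1)" by simp
        moreover have "2 powr (real p - 1) = 2 powr real (p-1)" using p2 by (simp add: of_nat_diff)
        moreover have "(2::real) powr real (p-1) = 2^(p-1)" by (rule powr_realpow) simp
        ultimately show ?thesis by simp
      qed
      then have "L \<le> ln (2 powr (real p - 1))" unfolding L_def using p2
        by (subst ln_le_cancel_iff) auto
      then have "L \<le> (real p - 1) * ln 2" by (simp add: ln_powr)
      then show ?thesis using q by (simp add: q_def field_simps)
    qed
    have e2: "L \<le> ln q + ln 2"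
    proof -
      have "real p \<le> 2 * q" using p3 by (simp add: q_def)
      then have "L \<le> ln (2*q)" unfolding L_def using p2 by (subst ln_le_cancel_iff) auto
      then show ?thesis using q by (simp add: ln_mult)
    qed
    have phi: "real a * L / q - (real a-1) * ln q / (q-1) - ln 2
        = ((q - real a) * (L/q - ln 2) + (real a - 1) * (L - ln q - ln 2)) / (q - 1)"
      using q by (simp add: field_simps)
    have "(q - real a) * (L/q - ln 2) \<le> 0" using e1 ap q by (intro mult_nonneg_nonpos) (auto simp: q_def of_nat_diff)
    moreover have "(real a - 1) * (L - ln q - ln 2) \<le> 0" using e2 a1 by (intro mult_nonneg_nonpos) auto
    ultimately have "real a * L / q - (real a-1) * ln q / (q-1) - ln 2 \<le> 0"
      unfolding phi using q by (intro divide_nonpos_pos) auto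
    then show ?thesis using ch by (simp add: q_def)
  qed
  show ?thesis using s1 s2 s3 by (simp add: L_def)
qed



definition hh :: "real \<Rightarrow> real \<Rightarrow> real" where
  "hh m t = 2 * (ln m - ln t) + ln 2"
definition GG :: "real \<Rightarrow> real \<Rightarrow> real" where
  "GG m s = 2 * (s * (ln m - ln s) + s) + ln 2 * s"

lemma tele:
  assumes "0 < u" "u < t"
  shows "(t - u) * hh m t \<le> GG m t - GG m u"
proof -
  have "ln (t/u) \<le> t/u - 1" using assms by (intro ln_le_minus_one) auto
  then have "u * ln (t/u) \<le> u * (t/u - 1)" using assms by (intro mult_left_mono) auto
  also have "\<dots> = t - u" using assms by (simp add: field_simps)
  finally have "u * (ln t - ln u) \<le> t - u" using assms by (simp add: ln_div)
  then show ?thesis unfolding hh_def GG_def by (simp add: algebra_simps)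
qed

lemma GG_le:
  assumes "0 < s" "s \<le> m"
  shows "GG m s \<le> GG m m"
proof -
  have "ln (m/s) \<le> m/s - 1" using assms by (intro ln_le_minus_one) auto
  then have "s * ln (m/s) \<le> s * (m/s - 1)" using assms by (intro mult_left_mono) auto
  also have "\<dots> = m - s" using assms by (simp add: field_simps)
  finally have "s * (ln m - ln s) \<le> m - s" using assms by (simp add: ln_div)
  moreover have "ln 2 * s \<le> ln 2 * m" using assms by (intro mult_left_mono) auto
  moreover have "GG m m = 2*m + ln 2*m" unfolding GG_def by simp
  moreover have "GG m s = 2 * (s * (ln m - ln s)) + 2 * s + ln 2 * s" unfolding GG_def by simp
  ultimately show ?thesis by linarith
qed

lemma class_tele:
  assumes "r > 0"
  shows "(\<Sum>j<N. hh m (r + 6 * (real j + 1))) \<le> (GG m (r + 6 * real N) - GG m r) / 6"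
proof (induction N)
  case 0 then show ?case by simp
next
  case (Suc N)
  have "(6::real) * hh m (r + 6 * (real N + 1)) \<le> GG m (r + 6 * (real N + 1)) - GG m (r + 6 * real N)"
    using tele[of "r + 6 * real N" "r + 6 * (real N + 1)" m] assms by simp
  then show ?case using Suc.IH by (simp add: algebra_simps)
qed

lemma class_sum:
  fixes r :: nat and m :: real
  assumes r: "0 < r" "r < 6" and rm: "real r \<le> m"
  shows "(\<Sum>t\<in>{t::nat. r < t \<and> real t \<le> m \<and> t mod 6 = r}. hh m (real t)) \<le> (GG m m - GG m r) / 6"
proof -
  define N where "N = nat \<lfloor>(m - r) / 6\<rfloor>"
  define f where "f = (\<lambda>j::nat. r + 6 * (j + 1))"
  have N6: "real r + 6 * real N \<le> m"
  proof -
    have "0 \<le> (m - r)/6" using rm by simp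
    then have "real N \<le> (m - r) / 6" unfolding N_def by linarith
    then show ?thesis by simp
  qed
  have sub: "{t::nat. r < t \<and> real t \<le> m \<and> t mod 6 = r} \<subseteq> f ` {..<N}"
  proof
    fix t assume t: "t \<in> {t::nat. r < t \<and> real t \<le> m \<and> t mod 6 = r}"
    then have tr: "t = 6 * (t div 6) + r" "r < t" "real t \<le> m" by auto
    then have d1: "t div 6 \<ge> 1" by (metis add_0 less_irrefl mult_0_right not_less_eq_eq One_nat_def le0 le_antisym)
    have "real (6 * (t div 6)) \<le> m - r" using tr by (metis add_diff_cancel_right' diff_right_mono of_nat_add)
    then have "real (t div 6) \<le> (m - r)/6" by simp
    then have "int (t div 6) \<le> \<lfloor>(m - r)/6\<rfloor>" by (simp add: le_floor_iff)
    then have "t div 6 \<le> N" unfolding N_def by linarith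
    then have "t div 6 - 1 < N" using d1 by linarith
    moreover have "t = f (t div 6 - 1)" using tr d1 unfolding f_def by simp
    ultimately show "t \<in> f ` {..<N}" by blast
  qed
  have inj: "inj_on f {..<N}" unfolding f_def by (auto simp: inj_on_def)
  have fin: "finite (f ` {..<N})" by simp
  have nonneg: "\<forall>t \<in> f ` {..<N}. 0 \<le> hh m (real t)"
  proof
    fix t assume "t \<in> f ` {..<N}"
    then obtain j where j: "j < N" "t = f j" by auto
    then have "real t \<le> real r + 6 * real N" unfolding f_def by simp
    then have "real t \<le> m" using N6 by linarith
    moreover have "real t > 0" using j unfolding f_def by simp
    ultimately have "ln (real t) \<le> ln m" by simp
    then show "0 \<le> hh m (real t)" unfolding hh_def using ln_2_less_1 ln_ge_zero[of 2] by simp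
  qed
  have "(\<Sum>t\<in>{t::nat. r < t \<and> real t \<le> m \<and> t mod 6 = r}. hh m (real t)) \<le> (\<Sum>t\<in>f ` {..<N}. hh m (real t))"
    using sub fin nonneg by (intro sum_mono2) auto
  also have "\<dots> = (\<Sum>j<N. hh m (real (f j)))" using inj by (simp add: sum.reindex)
  also have "\<dots> = (\<Sum>j<N. hh m (real r + 6 * (real j + 1)))" unfolding f_def by (simp add: algebra_simps)
  also have "\<dots> \<le> (GG m (r + 6 * real N) - GG m r) / 6" using class_tele r by simp
  also have "\<dots> \<le> (GG m m - GG m r) / 6" using GG_le[of "r + 6 * real N" m] N6 r by simp
  finally show ?thesis .
qed



lemma theta_bound:
  fixes m :: real assumes m: "m \<ge> 1"
  shows "(\<Sum>p\<in>{p. prime p \<and> real p \<le> m}. ln (real p)) \<le> (m - 1) * ln 4"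
proof -
  define N where "N = nat \<lfloor>m\<rfloor>"
  have N1: "N \<ge> 1" using m unfolding N_def by linarith
  have Nm: "real N \<le> m" using m unfolding N_def by linarith
  have iff: "real p \<le> m \<longleftrightarrow> p \<le> N" for p :: nat
  proof -
    have "\<lfloor>m\<rfloor> \<ge> 0" using m by simp
    then have "p \<le> N \<longleftrightarrow> int p \<le> \<lfloor>m\<rfloor>" by (simp add: N_def le_nat_iff)
    also have "\<dots> \<longleftrightarrow> real p \<le> m" by (simp add: le_floor_iff)
    finally show ?thesis by simp
  qed
  have eq: "{p. prime p \<and> real p \<le> m} = {p. prime p \<and> p \<le> N}" using iff by auto
  have fin: "finite {p. prime p \<and> p \<le> N}" by simp
  have "(\<Sum>p\<in>{p. prime p \<and> p \<le> N}. ln (real p)) = ln (\<Prod>p\<in>{p. prime p \<and> p \<le> N}. real p)"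
    using fin by (subst ln_prod) (auto dest: prime_gt_0_nat)
  also have "(\<Prod>p\<in>{p. prime p \<and> p \<le> N}. real p) = real (\<Prod>{p. prime p \<and> p \<le> N})" by simp
  also have "ln (real (\<Prod>{p. prime p \<and> p \<le> N})) \<le> ln (real ((4::nat)^(N-1)))"
  proof -
    have "real (\<Prod>{p. prime p \<and> p \<le> N}) \<le> real ((4::nat)^(N-1))"
      using primorial_bound[OF N1] by (simp only: of_nat_le_iff)
    moreover have "0 < \<Prod>{p. prime p \<and> p \<le> N}" by (rule prod_pos) (auto simp: prime_gt_0_nat)
    then have "real (\<Prod>{p. prime p \<and> p \<le> N}) > 0" by (simp only: of_nat_0_less_iff)
    ultimately show ?thesis by simp
  qed
  also have "\<dots> = real (N - 1) * ln 4" by (simp add: ln_realpow)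
  also have "\<dots> \<le> (m - 1) * ln 4" using Nm N1 by (intro mult_right_mono) (auto simp: of_nat_diff)
  finally show ?thesis unfolding eq .
qed

lemma prime_mod6:
  fixes p :: nat assumes "prime p" "p \<noteq> 2" "p \<noteq> 3"
  shows "p mod 6 = 1 \<or> p mod 6 = 5"
proof -
  have "p mod 6 < 6" by simp
  moreover have "p mod 6 \<noteq> 0" "p mod 6 \<noteq> 2" "p mod 6 \<noteq> 4"
  proof -
    have "\<not> 2 dvd p"
    proof assume "2 dvd p" then show False using assms unfolding prime_nat_iff by force qed
    then show "p mod 6 \<noteq> 0" "p mod 6 \<noteq> 2" "p mod 6 \<noteq> 4" by presburger+
  qed
  moreover have "p mod 6 \<noteq> 3"
  proof -
    have "\<not> 3 dvd p"
    proof assume "3 dvd p" then show False using assms unfolding prime_nat_iff by force qed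
    then show ?thesis by presburger
  qed
  ultimately show ?thesis by linarith
qed

lemma sum_Un_le':
  fixes f :: "'a \<Rightarrow> real"
  assumes "finite A" "finite B" "\<And>x. x \<in> A \<union> B \<Longrightarrow> 0 \<le> f x"
  shows "sum f (A \<union> B) \<le> sum f A + sum f B"
proof -
  have "sum f (A \<union> B) = sum f A + sum f B - sum f (A \<inter> B)" using assms sum_Un by (metis add_diff_cancel_right')
  moreover have "0 \<le> sum f (A \<inter> B)" using assms by (intro sum_nonneg) auto
  ultimately show ?thesis by linarith
qed

lemma key:
  fixes m :: real assumes m: "m \<ge> 1"
  shows "(\<Sum>p\<in>{p. prime p \<and> real p \<le> m}. 2 * ln m + ln 2) \<le> 4 * m"
proof (cases "m < 5")
  case True
  have sub: "{p. prime p \<and> real p \<le> m} \<subseteq> {2,3}"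
  proof
    fix p assume "p \<in> {p. prime p \<and> real p \<le> m}"
    then have p: "prime p" "p < 5" using True by auto
    have "\<not> prime (4::nat)" by code_simp
    then have "p \<noteq> 4" "p \<noteq> 0" "p \<noteq> 1" using p by auto
    then have "p = 2 \<or> p = 3" using p by presburger
    then show "p \<in> {2,3}" by auto
  qed
  then have "card {p. prime p \<and> real p \<le> m} \<le> 2" 
    using card_mono[OF _ sub] by simp
  moreover have "0 \<le> 2 * ln m + ln 2" using m by simp
  ultimately have "real (card {p. prime p \<and> real p \<le> m}) * (2 * ln m + ln 2) \<le> 2 * (2 * ln m + ln 2)"
    by (intro mult_right_mono) auto
  then have "(\<Sum>p\<in>{p. prime p \<and> real p \<le> m}. 2 * ln m + ln 2) \<le> 2 * (2 * ln m + ln 2)"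
    by simp
  moreover have "ln m \<le> m - 1" using m by (intro ln_le_minus_one) auto
  then have "2 * (2 * ln m + ln 2) \<le> 4 * m" using ln_2_less_1 by (smt (verit))
  ultimately show ?thesis by (rule order.trans)
next
  case False
  then have m5: "m \<ge> 5" by simp
  define P where "P = {p. prime p \<and> real p \<le> m}"
  define C1 where "C1 = {t::nat. 1 < t \<and> real t \<le> m \<and> t mod 6 = 1}"
  define C5 where "C5 = {t::nat. 5 < t \<and> real t \<le> m \<and> t mod 6 = 5}"
  have finB: "finite {t::nat. real t \<le> m}"
  proof (rule finite_subset[of _ "{..nat \<lceil>m\<rceil>}"])
    show "{t::nat. real t \<le> m} \<subseteq> {..nat \<lceil>m\<rceil>}"
    proof
      fix x assume "x \<in> {t::nat. real t \<le> m}"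
      then have "real x \<le> m" by simp
      moreover have "m \<le> real_of_int \<lceil>m\<rceil>" by (rule le_of_int_ceiling)
      ultimately have "real x \<le> real_of_int \<lceil>m\<rceil>" by (rule order.trans)
      then have "real_of_int (int x) \<le> real_of_int \<lceil>m\<rceil>" by simp
      then have "int x \<le> \<lceil>m\<rceil>" by (simp only: of_int_le_iff)
      then show "x \<in> {..nat \<lceil>m\<rceil>}" by simp
    qed
  qed simp
  have fP: "finite P" "finite C1" "finite C5" unfolding P_def C1_def C5_def
    by (auto intro: finite_subset[OF _ finB])
  have hnn: "0 \<le> hh m (real t)" if "real t \<le> m" "t > 0" for t
    using that ln_2_less_1 ln_ge_zero[of 2] by (simp add: hh_def)
  have split: "(\<Sum>p\<in>P. 2 * ln m + ln 2) = 2 * (\<Sum>p\<in>P. ln (real p)) + (\<Sum>p\<in>P. hh m (real p))"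
  proof -
    have "(\<Sum>p\<in>P. 2 * ln m + ln 2) = (\<Sum>p\<in>P. 2 * ln (real p) + hh m (real p))"
      by (rule sum.cong) (auto simp: hh_def)
    also have "\<dots> = 2 * (\<Sum>p\<in>P. ln (real p)) + (\<Sum>p\<in>P. hh m (real p))"
      by (simp add: sum.distrib sum_distrib_left)
    finally show ?thesis .
  qed
  have th: "(\<Sum>p\<in>P. ln (real p)) \<le> (m - 1) * ln 4" unfolding P_def using theta_bound m by simp
  have "P \<subseteq> {2,3,5} \<union> C1 \<union> C5"
  proof
    fix p assume "p \<in> P"
    then have p: "prime p" "real p \<le> m" by (auto simp: P_def)
    show "p \<in> {2,3,5} \<union> C1 \<union> C5"
    proof (cases "p = 2 \<or> p = 3 \<or> p = 5")
      case True then show ?thesis by auto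
    next
      case False
      then have "p mod 6 = 1 \<or> p mod 6 = 5" using prime_mod6 p by auto
      moreover have "p > 1" using p prime_gt_1_nat by blast
      ultimately show ?thesis using p False by (auto simp: C1_def C5_def)
    qed
  qed
  then have "(\<Sum>p\<in>P. hh m (real p)) \<le> (\<Sum>p\<in>{2,3,5} \<union> C1 \<union> C5. hh m (real p))"
    using fP m5 by (intro sum_mono2) (auto simp: C1_def C5_def intro!: hnn)
  also have "\<dots> \<le> (\<Sum>p\<in>{2,3,5} \<union> C1. hh m (real p)) + (\<Sum>p\<in>C5. hh m (real p))"
    using fP m5 by (intro sum_Un_le') (auto simp: C1_def C5_def intro!: hnn)
  also have "(\<Sum>p\<in>{2,3,5} \<union> C1. hh m (real p)) \<le> (\<Sum>p\<in>{2,3,5::nat}. hh m (real p)) + (\<Sum>p\<in>C1. hh m (real p))"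
    using fP m5 by (intro sum_Un_le') (auto simp: C1_def C5_def intro!: hnn)
  also have "(\<Sum>p\<in>{2,3,5::nat}. hh m (real p)) = hh m 2 + hh m 3 + hh m 5" by simp
  finally have hs: "(\<Sum>p\<in>P. hh m (real p)) \<le> hh m 2 + hh m 3 + hh m 5 + (\<Sum>p\<in>C1. hh m (real p)) + (\<Sum>p\<in>C5. hh m (real p))"
    by simp
  have "(\<Sum>p\<in>C1. hh m (real p)) \<le> (GG m m - GG m 1) / 6"
    using class_sum[of 1 m] m5 unfolding C1_def by simp
  then have c1: "6 * (\<Sum>p\<in>C1. hh m (real p)) \<le> GG m m - GG m 1" by simp
  have "(\<Sum>p\<in>C5. hh m (real p)) \<le> (GG m m - GG m 5) / 6"
    using class_sum[of 5 m] m5 unfolding C5_def by simp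
  then have c5: "6 * (\<Sum>p\<in>C5. hh m (real p)) \<le> GG m m - GG m 5" by simp
  have g1: "GG m m = 2 * m + m * ln 2" "GG m 1 = 2 * ln m + 2 + ln 2"
    "GG m 5 = 10 * ln m - 10 * ln 5 + 10 + 5 * ln 2" unfolding GG_def by simp_all
  have h1: "hh m 2 = 2 * ln m - 2 * ln 2 + ln 2" "hh m 3 = 2 * ln m - 2 * ln 3 + ln 2"
    "hh m 5 = 2 * ln m - 2 * ln 5 + ln 2" unfolding hh_def by simp_all
  have l4: "ln (4::real) = 2 * ln 2"
    using ln_realpow[of 2 2] by simp
  have t4: "(m - 1) * ln 4 = 2 * (m * ln 2) - 2 * ln 2" unfolding l4 by (simp add: algebra_simps)
  have l2: "ln (2::real) \<le> 25/36" by (rule ln2_le_25_over_36)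
  have ml2: "m * ln 2 \<le> m * (25/36)" using l2 m5 by (intro mult_left_mono) auto
  have "ln (3::real) \<le> ln 4" by simp
  then have l3: "ln (3::real) \<le> 2 * ln 2" using l4 by simp
  have l5: "ln (5::real) \<ge> 0" by simp
  have lm: "ln m \<le> m / 13 + 2 * ln 2 + ln 3 + 1/12 - 1"
  proof -
    have a: "ln (m / 13) \<le> m / 13 - 1" using m5 by (intro ln_le_minus_one) auto
    have b: "ln ((13::real) / 12) \<le> 13/12 - 1" by (intro ln_le_minus_one) auto
    have "ln ((4::real) * 3) = ln 4 + ln 3" by (rule ln_mult_pos) auto
    then have c: "ln (12::real) = 2 * ln 2 + ln 3" using l4 by simp
    have "ln m = ln (m/13) + ln (13/12) + ln 12" using m5 by (simp add: ln_div)
    then show ?thesis using a b c by linarith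
  qed
  then have lm13: "13 * ln m \<le> m + 26 * ln 2 + 13 * ln 3 + 13/12 - 13" by simp
  have "(\<Sum>p\<in>P. 2 * ln m + ln 2) \<le> 4 * m"
    using split th hs c1 c5 g1 h1 t4 ml2 l2 l3 l5 lm13 m5 by linarith
  then show ?thesis unfolding P_def .
qed

theorem lemma2p1:
  fixes n :: nat
  assumes "n \<ge> 2"
  shows "(\<Sum>p\<in>{p. prime p \<and> real p \<le> sqrt (real n)}.
            (real n - 1) / (real p - 1) * real (digit_sum p n) * ln (real p))
         \<le> 4 * real n powr (3/2)"
proof -
  define m where "m = sqrt (real n)"
  define P where "P = {p. prime p \<and> real p \<le> sqrt (real n)}"
  have n2: "real n \<ge> 2" using assms by simp
  have m1: "m \<ge> 1" unfolding m_def using n2 by simp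
  have mm: "m * m = real n" unfolding m_def using n2 by simp
  have lnn: "ln (real n) = 2 * ln m" unfolding m_def using n2 by (simp add: ln_sqrt)
  have fin: "finite P"
  proof (rule finite_subset[of _ "{..n}"])
    show "P \<subseteq> {..n}"
    proof
      fix p assume "p \<in> P"
      then have "real p \<le> m" by (simp add: P_def m_def)
      also have "m \<le> m * m" using m1 by simp
      finally have "real p \<le> real n" using mm by simp
      then show "p \<in> {..n}" by simp
    qed
  qed simp
  have termb: "(real n - 1) / (real p - 1) * real (digit_sum p n) * ln (real p)
      \<le> (real n - 1) * (2 * ln m + ln 2)" if pP: "p \<in> P" for p
  proof -
    have p: "prime p" "real p \<le> m" using pP by (auto simp: P_def m_def)
    have "m \<le> m * m" using m1 by simp
    then have "real p \<le> real n" using p mm by simp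
    then have pn: "p \<le> n" by simp
    have "(real n - 1) / (real p - 1) * real (digit_sum p n) * ln (real p)
        = (real n - 1) * (real (digit_sum p n) * ln (real p) / (real p - 1))" by simp
    also have "\<dots> \<le> (real n - 1) * (ln (real n) + ln 2)"
      using per_prime[OF p(1) pn] n2 by (intro mult_left_mono) auto
    finally show ?thesis using lnn by simp
  qed
  have "(\<Sum>p\<in>P. (real n - 1) / (real p - 1) * real (digit_sum p n) * ln (real p))
      \<le> (\<Sum>p\<in>P. (real n - 1) * (2 * ln m + ln 2))"
    by (intro sum_mono termb)
  also have "\<dots> = (real n - 1) * (\<Sum>p\<in>P. 2 * ln m + ln 2)" by (simp add: sum_distrib_left)
  also have "\<dots> \<le> (real n - 1) * (4 * m)"
    using key[OF m1] n2 unfolding P_def m_def by (intro mult_left_mono) auto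
  also have "\<dots> \<le> real n * (4 * m)" using m1 by (intro mult_right_mono) auto
  also have "\<dots> = 4 * real n powr (3/2)"
  proof -
    have "real n powr (3/2) = real n powr (1 + 1/2)" by simp
    also have "\<dots> = real n powr 1 * real n powr (1/2)" by (rule powr_add)
    also have "\<dots> = real n * m" using n2 by (simp add: m_def powr_half_sqrt)
    finally show ?thesis by simp
  qed
  finally show ?thesis unfolding P_def .
qed

end
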